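(* Let $T>0$, let $V>0$ and $R\ge 2V$ be constants, and let $H:[0,T]\times\mathbb R^{D_{L-1}}\times\mathbb R^{D_L}\to\mathbb R^{D_{L-1}}$ be continuous and such that: (1) $|H|\le V$ everywhere; (2) for each fixed $t\in[0,T]$ and $a^{(L-1)}\in\mathbb R^{D_{L-1}}$, the map $a^{(L)}\mapsto H(t,a^{(L-1)},a^{(L)})$ is $Ve^{Rt}$-Lipschitz; (3) for each fixed $t\in[0,T]$ and $a^{(L)}\in\mathbb R^{D_L}$, the map $a^{(L-1)}\mapsto H(t,a^{(L-1)},a^{(L)})$ is $V$-Lipschitz. For $a=(a^{(L-1)},a^{(L)})$ let $G(a)\in C([0,T],\mathbb R^{D_{L-1}})$ be the solution of $x(0)=a^{(L-1)}$, $x'(t)=H(t,x(t),a^{(L)})$, $t\in[0,T]$. Then $G$ is an $R$-special function.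
   Context: Here $D_{L-1},D_L\ge1$ are integers. A map $F:\mathbb R^{D_{L-1}}\times\mathbb R^{D_L}\to C([0,T],\mathbb R^{D_{L-1}})$ is $R$-special if (1) for each $a=(a^{(L-1)},a^{(L)})$, $t\mapsto F(a)(t)$ is $R$-Lipschitz and $F(a)(0)=a^{(L-1)}$; and (2) for each $t\in[0,T]$, the map $a\mapsto F(a)(t)$ is $e^{Rt}$-Lipschitz (Euclidean norms). *)

theory Defs
  imports "HOL-Analysis.Analysis"
begin

text \<open>The dimensions are the euclidean_space type variables 'a, 'b; the norm on
  the product type 'a \<times> 'b is the Euclidean norm sqrt(|x|^2+|y|^2).
  Elements of C([0,T],R^D) are represented as functions real => 'a continuous on [0,T].\<close>
definition R_special :: "real \<Rightarrow> real \<Rightarrow> ('a::euclidean_space \<times> 'b::euclidean_space \<Rightarrow> real \<Rightarrow> 'a) \<Rightarrow> bool" where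
  "R_special T R F \<longleftrightarrow>
     (\<forall>a. continuous_on {0..T} (F a)
          \<and> R-lipschitz_on {0..T} (F a)
          \<and> F a 0 = fst a)
   \<and> (\<forall>t\<in>{0..T}. (exp (R * t))-lipschitz_on UNIV (\<lambda>a. F a t))"

end

theory Submission imports Defs begin
lemma inner_der:
  fixes d :: "real \<Rightarrow> 'a::real_inner"
  assumes "(d has_vector_derivative v) (at s)"
  shows "((\<lambda>s. d s \<bullet> d s) has_real_derivative 2*(d s \<bullet> v)) (at s)"
proof -
  have "((\<lambda>s. d s \<bullet> d s) has_derivative (\<lambda>h. d s \<bullet> (h *\<^sub>R v) + (h *\<^sub>R v) \<bullet> d s)) (at s)"
    using assms unfolding has_vector_derivative_def by (intro derivative_intros) auto
  moreover have "(\<lambda>h. d s \<bullet> (h *\<^sub>R v) + (h *\<^sub>R v) \<bullet> d s) = (*) (2*(d s \<bullet> v))"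
    by (auto simp: inner_commute algebra_simps)
  ultimately show ?thesis unfolding has_field_derivative_def by simp
qed
lemma sqrt_der:
  fixes d :: "real \<Rightarrow> 'a::real_inner"
  assumes "(d has_vector_derivative v) (at s)" "\<delta> > 0"
  shows "((\<lambda>s. sqrt (d s \<bullet> d s + \<delta>^2)) has_real_derivative (d s \<bullet> v) / sqrt (d s \<bullet> d s + \<delta>^2)) (at s)"
proof -
  have pos: "d s \<bullet> d s + \<delta>^2 > 0" using assms(2) by (simp add: add_nonneg_pos)
  have "((\<lambda>s. sqrt (d s \<bullet> d s + \<delta>^2)) has_real_derivative inverse (sqrt (d s \<bullet> d s + \<delta>^2)) / 2 * (2*(d s \<bullet> v) + 0)) (at s)"
  proof -
    have g: "((\<lambda>s. d s \<bullet> d s + \<delta>^2) has_real_derivative (2*(d s \<bullet> v) + 0)) (at s)"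
      by (intro derivative_intros inner_der assms)
    show ?thesis using DERIV_chain2[OF DERIV_real_sqrt[OF pos] g] by simp
  qed
  then show ?thesis by (simp add: field_simps)
qed

lemma gronwall_aux:
  fixes d d' :: "real \<Rightarrow> 'a::real_inner"
  assumes t: "0 < t" and cont: "continuous_on {0..t} d"
   and der: "\<And>s. 0<s \<Longrightarrow> s<t \<Longrightarrow> (d has_vector_derivative d' s) (at s)"
   and bnd: "\<And>s. 0<s \<Longrightarrow> s<t \<Longrightarrow> norm (d' s) \<le> V * norm (d s) + V * exp (R * s) * q"
   and V: "V>0" and R: "R \<ge> 2 * V" and q: "q \<ge> 0" and p: "norm (d 0) \<le> p"
  shows "norm (d t) \<le> exp (V * t) * p + (exp(R * t) - exp(V * t)) * q"
proof -
  define w where "w s = exp(V * s) * p + (exp(R * s)-exp(V * s)) * q" for s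
  define w' where "w' s = V * exp(V * s) * p + (R * exp(R * s)-V * exp(V * s)) * q" for s
  have wder: "(w has_real_derivative w' s) (at s)" for s
    unfolding w_def w'_def by (auto intro!: derivative_eq_intros)
  have main: "norm (d t) \<le> w t + \<delta> * exp(V * t)" if dpos: "\<delta>>0" for \<delta>
  proof -
    define N where "N s = sqrt (d s \<bullet> d s + \<delta>^2)" for s
    define z where "z s = (N s - w s) * exp(-(V * s))" for s
    define zd where "zd s = (((d s \<bullet> d' s)/N s - w' s) - V * (N s - w s)) * exp(-(V * s))" for s
    have Npos: "N s > 0" for s unfolding N_def using dpos by (simp add: add_nonneg_pos)
    have normN: "norm (d s) \<le> N s" for s
      unfolding N_def by (simp add: real_le_rsqrt norm_eq_sqrt_inner power2_eq_square[symmetric])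
    have zc: "continuous_on {0..t} z"
      unfolding z_def N_def w_def by (intro continuous_intros cont)
    have zder: "(z has_real_derivative zd s) (at s)" if "0<s" "s<t" for s
    proof -
      have "(z has_real_derivative ((d s \<bullet> d' s)/N s - w' s) * exp(-(V * s)) + (N s - w s) * (exp(-(V * s)) * (-V))) (at s)"
      proof -
        have n: "(N has_real_derivative (d s \<bullet> d' s)/N s) (at s)"
          using sqrt_der[OF der[OF that] dpos] unfolding N_def[abs_def] .
        have e: "((\<lambda>s. exp(-(V * s))) has_real_derivative exp(-(V * s)) * (-V)) (at s)"
          by (auto intro!: derivative_eq_intros)
        show ?thesis using DERIV_mult[OF DERIV_diff[OF n wder] e] unfolding z_def[abs_def] by (simp add: algebra_simps)
      qed
      then show ?thesis unfolding zd_def by (simp add: algebra_simps)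
    qed
    obtain l \<xi> where xi: "0<\<xi>" "\<xi><t" and dz: "(z has_real_derivative l) (at \<xi>)" and eq: "z t - z 0 = (t-0) * l"
      using MVT[OF t zc] zder by (metis real_differentiable_def)
    have "l = zd \<xi>" using DERIV_unique[OF dz zder[OF xi]] .
    moreover have "zd \<xi> \<le> 0"
    proof -
      have "(d \<xi> \<bullet> d' \<xi>)/N \<xi> \<le> norm (d \<xi>) * norm (d' \<xi>) / N \<xi>"
        using Npos[of \<xi>] by (intro divide_right_mono) (auto intro: order_trans[OF _ norm_cauchy_schwarz])
      also have "\<dots> \<le> norm (d' \<xi>)"
        using Npos[of \<xi>] normN[of \<xi>] by (simp add: divide_le_eq) (metis mult.commute mult_right_mono norm_ge_zero)
      also have "\<dots> \<le> V * N \<xi> + V * exp (R * \<xi>) * q"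
        using bnd[OF xi] normN[of \<xi>] V by (smt (verit) mult_left_mono)
      finally have a: "(d \<xi> \<bullet> d' \<xi>)/N \<xi> \<le> V * N \<xi> + V * exp (R * \<xi>) * q" .
      have b: "w' \<xi> - V * w \<xi> \<ge> V * exp (R * \<xi>) * q"
      proof -
        have "w' \<xi> - V * w \<xi> = (R - V) * exp(R * \<xi>) * q" unfolding w_def w'_def by (simp add: algebra_simps)
        moreover have "(R - V) * exp(R * \<xi>) * q \<ge> V * exp (R * \<xi>) * q"
          using R q by (intro mult_right_mono) auto
        ultimately show ?thesis by simp
      qed
      have "((d \<xi> \<bullet> d' \<xi>)/N \<xi> - w' \<xi>) - V * (N \<xi> - w \<xi>) \<le> 0" using a b by (simp add: algebra_simps)
      then show ?thesis unfolding zd_def by (simp add: mult_nonpos_nonneg)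
    qed
    ultimately have "z t \<le> z 0" using eq t mult_nonneg_nonpos[of t "zd \<xi>"] by simp
    moreover have "z 0 \<le> \<delta>"
    proof -
      have "N 0 = sqrt ((norm (d 0))^2 + \<delta>^2)" unfolding N_def by (simp add: power2_norm_eq_inner)
      also have "\<dots> \<le> sqrt ((norm (d 0) + \<delta>)^2)"
        using dpos by (intro real_sqrt_le_mono) (simp add: power2_sum)
      also have "\<dots> = norm (d 0) + \<delta>" using dpos by simp
      finally have "N 0 \<le> norm (d 0) + \<delta>" .
      then show ?thesis unfolding z_def w_def using p by simp
    qed
    ultimately have "(N t - w t) * exp(-(V * t)) \<le> \<delta>" unfolding z_def by simp
    then have "N t - w t \<le> \<delta> * exp(V * t)" by (simp add: exp_minus field_simps)
    then show ?thesis using normN[of t] by simp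
  qed
  have "norm (d t) \<le> w t"
  proof (rule field_le_epsilon)
    fix e :: real assume e: "e > 0"
    have "norm (d t) \<le> w t + (e / exp(V * t)) * exp(V * t)" using main[of "e / exp(V * t)"] e by simp
    then show "norm (d t) \<le> w t + e" by simp
  qed
  then show ?thesis unfolding w_def .
qed

theorem proposition8p8:
  fixes H :: "real \<Rightarrow> 'a::euclidean_space \<Rightarrow> 'b::euclidean_space \<Rightarrow> 'a"
    and G :: "'a \<times> 'b \<Rightarrow> real \<Rightarrow> 'a"
    and T V R :: real
  assumes T_pos: "T > 0"
    and V_pos: "V > 0"
    and R_ge: "R \<ge> 2 * V"
    and H_cont: "continuous_on ({0..T} \<times> UNIV \<times> UNIV) (\<lambda>(t, x, y). H t x y)"
    and H_bound: "\<And>t x y. t \<in> {0..T} \<Longrightarrow> norm (H t x y) \<le> V"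
    and H_lip_last: "\<And>t x. t \<in> {0..T} \<Longrightarrow> (V * exp (R * t))-lipschitz_on UNIV (\<lambda>y. H t x y)"
    and H_lip_first: "\<And>t y. t \<in> {0..T} \<Longrightarrow> V-lipschitz_on UNIV (\<lambda>x. H t x y)"
    and G_cont: "\<And>a. continuous_on {0..T} (G a)"
    and G_init: "\<And>a. G a 0 = fst a"
    and G_ode: "\<And>a t. t \<in> {0..T} \<Longrightarrow>
                  (G a has_vector_derivative H t (G a t) (snd a)) (at t within {0..T})"
  shows "R_special T R G"
  unfolding R_special_def
proof (intro conjI allI ballI)
  fix a :: "'a \<times> 'b"
  show "continuous_on {0..T} (G a)" by (rule G_cont)
  show "G a 0 = fst a" by (rule G_init)
  show "R-lipschitz_on {0..T} (G a)"
  proof (rule lipschitz_onI)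
    fix x y assume xy: "x \<in> {0..T}" "y \<in> {0..T}"
    have "norm (G a x - G a y) \<le> V * norm (x - y)"
    proof (rule differentiable_bound[where f' = "\<lambda>s h. h *\<^sub>R H s (G a s) (snd a)"])
      show "convex {0..T}" by simp
      show "(G a has_derivative (\<lambda>h. h *\<^sub>R H s (G a s) (snd a))) (at s within {0..T})"
        if "s \<in> {0..T}" for s using G_ode[OF that] unfolding has_vector_derivative_def .
      show "onorm (\<lambda>h. h *\<^sub>R H s (G a s) (snd a)) \<le> V" if "s \<in> {0..T}" for s
        using onorm_scaleR_left[OF bounded_linear_ident, of "H s (G a s) (snd a)"] H_bound[OF that]
        by (simp add: onorm_id)
    qed (use xy in auto)
    also have "\<dots> \<le> R * norm (x - y)" using R_ge V_pos by (intro mult_right_mono) auto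
    finally show "dist (G a x) (G a y) \<le> R * dist x y" by (simp add: dist_norm)
  next
    show "0 \<le> R" using R_ge V_pos by simp
  qed
next
  fix t assume t: "t \<in> {0..T}"
  show "(exp (R * t))-lipschitz_on UNIV (\<lambda>a. G a t)"
  proof (rule lipschitz_onI)
    fix a b :: "'a \<times> 'b"
    define p where "p = norm (fst a - fst b)"
    define q where "q = norm (snd a - snd b)"
    define n where "n = norm (a - b)"
    have pn: "p \<le> n" unfolding p_def n_def using norm_fst_le[of "fst (a-b)" "snd (a-b)"] by (metis fst_diff snd_diff prod.collapse)
    have qn: "q \<le> n" unfolding q_def n_def using norm_snd_le[of "snd (a-b)" "fst (a-b)"] by (metis fst_diff snd_diff prod.collapse)
    have "norm (G a t - G b t) \<le> exp (R * t) * n"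
    proof (cases "t = 0")
      case True
      then show ?thesis using pn by (simp add: G_init p_def)
    next
      case False
      then have tpos: "0 < t" using t by simp
      have "norm (G a t - G b t) \<le> exp (V * t) * p + (exp (R * t) - exp (V * t)) * q"
      proof (rule gronwall_aux[where d = "\<lambda>s. G a s - G b s"
            and d' = "\<lambda>s. H s (G a s) (snd a) - H s (G b s) (snd b)"])
        show "0 < t" by (rule tpos)
        show "continuous_on {0..t} (\<lambda>s. G a s - G b s)"
          using t by (intro continuous_on_diff continuous_on_subset[OF G_cont]) auto
        show "((\<lambda>s. G a s - G b s) has_vector_derivative H s (G a s) (snd a) - H s (G b s) (snd b)) (at s)"
          if "0 < s" "s < t" for s
        proof -
          have s: "s \<in> {0..T}" using that t by auto
          have e: "at s within {0..T} = at s" using that t by (intro at_within_Icc_at) auto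
          show ?thesis using has_vector_derivative_diff[OF G_ode[OF s] G_ode[OF s]] unfolding e .
        qed
        show "norm (H s (G a s) (snd a) - H s (G b s) (snd b)) \<le> V * norm (G a s - G b s) + V * exp (R * s) * q"
          if "0 < s" "s < t" for s
        proof -
          have s: "s \<in> {0..T}" using that t by auto
          have "norm (H s (G a s) (snd a) - H s (G b s) (snd b)) \<le>
              norm (H s (G a s) (snd a) - H s (G b s) (snd a)) + norm (H s (G b s) (snd a) - H s (G b s) (snd b))"
            using norm_triangle_ineq[of "H s (G a s) (snd a) - H s (G b s) (snd a)" "H s (G b s) (snd a) - H s (G b s) (snd b)"] by simp
          also have "\<dots> \<le> V * norm (G a s - G b s) + V * exp (R * s) * q"
            using lipschitz_onD[OF H_lip_first[OF s, of "snd a"], of "G a s" "G b s"]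
              lipschitz_onD[OF H_lip_last[OF s, of "G b s"], of "snd a" "snd b"]
            by (auto simp: dist_norm q_def)
          finally show ?thesis .
        qed
        show "0 < V" by (rule V_pos)
        show "2 * V \<le> R" by (rule R_ge)
        show "0 \<le> q" unfolding q_def by simp
        show "norm (G a 0 - G b 0) \<le> p" by (simp add: G_init p_def)
      qed
      also have "\<dots> \<le> exp (V * t) * n + (exp (R * t) - exp (V * t)) * n"
      proof (intro add_mono mult_left_mono pn qn)
        show "0 \<le> exp (R * t) - exp (V * t)" using R_ge V_pos tpos by simp
      qed simp
      also have "\<dots> = exp (R * t) * n" by (simp add: algebra_simps)
      finally show ?thesis .
    qed
    then show "dist (G a t) (G b t) \<le> exp (R * t) * dist a b" by (simp add: dist_norm n_def)
  qed simp
qed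

end
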